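(* Let $\mathcal{C}=\{C_1,\dots,C_m\}$ be a random 3XOR instance with $n$ variables and $m=cn$ equations, where $c\ge 10^{10}$. Then with probability $1-o(1)$, $\mathrm{GI}(G_{\mathcal{C}},G_{\mathcal{C}^0})<1-\frac{1}{95c^2}$.
   Context: A random 3XOR instance with $n$ variables and $m$ equations: choose $m$ unordered triples of distinct variables from the $\binom{n}{3}$ possible ones (uniformly at random) and make each triple $(x_{j_1},x_{j_2},x_{j_3})$ into an equation $x_{j_1}+x_{j_2}+x_{j_3}=b$ over $\mathbb{Z}_2$ with independent uniform $b$. $\mathcal{C}^0$ is obtained by replacing every right-hand side by $0$. Graph $G_{\mathcal{C}}$: for each variable $x$, two variable vertices $x\mapsto0,x\mapsto1$ joined by an edge; for each equation $C$ on $x_1,x_2,x_3$, four constraint vertices, one per satisfying assignment $(x_1\mapsto a_1,x_2\mapsto a_2,x_3\mapsto a_3)$ of $C$, forming a clique, each adjacent to the variable vertices $x_i\mapsto a_i$; variable vertices are shared across constraints, constraint vertices are not. $\mathrm{GI}(G,H)=\max_\pi\frac{|\{e\in E(G):\pi(e)\in E(H)\}|}{\max\{|E(G)|,|E(H)|\}}$ over bijections $\pi:V(G)\to V(H)$. *)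

theory Defs
  imports "HOL-Probability.Probability"
begin

text \<open>A 3XOR instance on variables 0..n-1 is a list of equations (S, b):
  S is the (unordered) set of three distinct variables, b the right-hand side;
  the equation reads  sum of x over S = b  over Z_2.\<close>

type_synonym xor_instance = "(nat set \<times> bool) list"

definition xor_instances :: "nat \<Rightarrow> nat \<Rightarrow> xor_instance set" where
  "xor_instances n m = {cs. length cs = m \<and>
     (\<forall>e \<in> set cs. fst e \<subseteq> {..<n} \<and> card (fst e) = 3)}"

text \<open>Random instance: each of the m equations independently gets a uniformly
  random 3-subset of the variables and an independent uniform right-hand side.\<close>
definition random_3xor :: "nat \<Rightarrow> nat \<Rightarrow> xor_instance pmf" where
  "random_3xor n m = pmf_of_set (xor_instances n m)"

definition homogenize :: "xor_instance \<Rightarrow> xor_instance" where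
  "homogenize cs = map (\<lambda>(S, b). (S, False)) cs"

definition sat_assign :: "nat set \<times> bool \<Rightarrow> (nat \<Rightarrow> bool) \<Rightarrow> bool" where
  "sat_assign C f \<longleftrightarrow> (\<forall>x. x \<notin> fst C \<longrightarrow> \<not> f x) \<and>
      odd (card {x \<in> fst C. f x}) = snd C"

datatype vtx = VarV nat bool | ConV nat "nat \<Rightarrow> bool"

definition graph_V :: "nat \<Rightarrow> xor_instance \<Rightarrow> vtx set" where
  "graph_V n cs = {VarV x a | x a. x < n} \<union>
     {ConV j f | j f. j < length cs \<and> sat_assign (cs ! j) f}"

definition graph_E :: "nat \<Rightarrow> xor_instance \<Rightarrow> vtx set set" where
  "graph_E n cs =
     {{VarV x False, VarV x True} | x. x < n} \<union>
     {{ConV j f, ConV j g} | j f g. j < length cs \<and> sat_assign (cs ! j) f \<and>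
         sat_assign (cs ! j) g \<and> f \<noteq> g} \<union>
     {{ConV j f, VarV x (f x)} | j f x. j < length cs \<and> sat_assign (cs ! j) f \<and>
         x \<in> fst (cs ! j)}"

definition GI :: "'a set \<Rightarrow> 'a set set \<Rightarrow> 'b set \<Rightarrow> 'b set set \<Rightarrow> real" where
  "GI V E W F = Max ((\<lambda>\<pi>. real (card {e \<in> E. \<pi> ` e \<in> F}) / real (max (card E) (card F)))
                      ` {\<pi>. bij_betw \<pi> V W})"

end

theory Submission
  imports Defs
begin


lemma adjVV: "{VarV x a, VarV y b} \<in> graph_E n cs \<longleftrightarrow> x = y \<and> a \<noteq> b \<and> x < n"
  unfolding graph_E_def by (auto simp: doubleton_eq_iff)

lemma adjCV: "{ConV k g, VarV y b} \<in> graph_E n cs \<longleftrightarrow>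
   k < length cs \<and> sat_assign (cs!k) g \<and> y \<in> fst (cs!k) \<and> b = g y"
  unfolding graph_E_def by (auto simp: doubleton_eq_iff)

lemma adjVC: "{VarV y b, ConV k g} \<in> graph_E n cs \<longleftrightarrow>
   k < length cs \<and> sat_assign (cs!k) g \<and> y \<in> fst (cs!k) \<and> b = g y"
  by (simp add: insert_commute adjCV)

lemma adjCC: "{ConV k g, ConV k' h} \<in> graph_E n cs \<longleftrightarrow>
   k = k' \<and> k < length cs \<and> sat_assign (cs!k) g \<and> sat_assign (cs!k) h \<and> g \<noteq> h"
  unfolding graph_E_def by (auto simp: doubleton_eq_iff)

lemma adj_irrefl: "{u} \<notin> graph_E n cs"
  unfolding graph_E_def by (auto simp: doubleton_eq_iff)

lemma parity3: "x \<noteq> y \<Longrightarrow> y \<noteq> z \<Longrightarrow> x \<noteq> z \<Longrightarrow>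
  odd (card {v \<in> {x,y,z}. g v}) = ((g x \<noteq> g y) \<noteq> g z)"
proof -
  assume d: "x \<noteq> y" "y \<noteq> z" "x \<noteq> z"
  have e: "{v \<in> {x,y,z}. g v} = (if g x then {x} else {}) \<union> (if g y then {y} else {}) \<union> (if g z then {z} else {})"
    by auto
  show ?thesis unfolding e using d
    by (cases "g x"; cases "g y"; cases "g z") (auto simp: card_insert_if)
qed

lemma third:
  assumes "card S = 3" "y \<noteq> z" "y \<in> S" "z \<in> S"
  obtains t where "S = {y,z,t}" "t \<noteq> y" "t \<noteq> z"
proof -
  have f: "finite S" using assms(1) by (metis card.infinite zero_neq_numeral)
  have "card (S - {y,z}) = 1" using assms f by (simp add: card_Diff_subset)
  then obtain t where t: "S - {y,z} = {t}" by (auto simp: card_Suc_eq)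
  hence "S = {y,z,t}" "t \<noteq> y" "t \<noteq> z" using assms by auto
  thus ?thesis using that by blast
qed

lemma sat_par:
  assumes "sat_assign C g" "fst C = {y,z,t}" "y \<noteq> z" "z \<noteq> t" "y \<noteq> t"
  shows "snd C = ((g y \<noteq> g z) \<noteq> g t)"
  using assms parity3[of y z t g] unfolding sat_assign_def by simp

lemma sat_out: "sat_assign C g \<Longrightarrow> v \<notin> fst C \<Longrightarrow> \<not> g v"
  unfolding sat_assign_def by auto

lemma sat_det:
  assumes "card (fst C) = 3" "sat_assign C g" "sat_assign C h" "y \<noteq> z"
    "y \<in> fst C" "z \<in> fst C" "g y = h y" "g z = h z"
  shows "g = h"
proof -
  obtain t where t: "fst C = {y,z,t}" "t \<noteq> y" "t \<noteq> z" by (rule third[OF assms(1,4,5,6)])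
  have "g t = h t" using sat_par[OF assms(2) t(1)] sat_par[OF assms(3) t(1)] assms t by auto
  show ?thesis
  proof
    fix v show "g v = h v"
      using sat_out[OF assms(2), of v] sat_out[OF assms(3), of v] t assms \<open>g t = h t\<close> by auto
  qed
qed

lemma sat_le4:
  assumes "card (fst C) = 3"
  shows "finite {g. sat_assign C g} \<and> card {g. sat_assign C g} \<le> 4"
proof -
  obtain y z w where yz: "fst C = {y,z,w}" "y \<noteq> z" "z \<noteq> w" "y \<noteq> w"
    using assms by (auto simp: card_3_iff)
  have inj: "inj_on (\<lambda>g. (g y, g z)) {g. sat_assign C g}"
    by (rule inj_onI) (use sat_det[OF assms] yz in auto)
  have "card {g. sat_assign C g} \<le> card (UNIV :: (bool \<times> bool) set)"
    by (rule card_inj_on_le[OF inj]) auto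
  moreover have "finite {g. sat_assign C g}"
    by (rule finite_imageD[OF _ inj]) simp
  ultimately show ?thesis by (simp add: card_UNIV_bool)
qed

lemma sat_le2:
  assumes "card (fst C) = 3" "sat_assign C g1" "sat_assign C g2" "sat_assign C g3"
    "g1 \<noteq> g2" "g1 \<noteq> g3" "g2 \<noteq> g3" "y \<in> fst C" "g1 y = b" "g2 y = b" "g3 y = b"
  shows False
proof -
  obtain z where z: "z \<in> fst C" "z \<noteq> y"
    using assms(1,8) by (metis card_3_iff insertCI)
  consider "g1 z = g2 z" | "g1 z = g3 z" | "g2 z = g3 z" by auto
  thus False
  proof cases
    case 1 thus False using sat_det[OF assms(1,2,3) _ assms(8) z(1)] assms z by auto
  next
    case 2 thus False using sat_det[OF assms(1,2,4) _ assms(8) z(1)] assms z by auto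
  next
    case 3 thus False using sat_det[OF assms(1,3,4) _ assms(8) z(1)] assms z by auto
  qed
qed

definition wf :: "xor_instance \<Rightarrow> bool" where
  "wf cs \<longleftrightarrow> (\<forall>k<length cs. card (fst (cs!k)) = 3)"

lemma noVarK4:
  fixes cs :: xor_instance and n y a and v2 v3 v4 :: vtx
  assumes w: "wf cs"
    and "{VarV y a, v2} \<in> graph_E n cs" "{VarV y a, v3} \<in> graph_E n cs" "{VarV y a, v4} \<in> graph_E n cs"
    "{v2, v3} \<in> graph_E n cs" "{v2, v4} \<in> graph_E n cs" "{v3, v4} \<in> graph_E n cs"
  shows False
proof (cases v2)
  case (VarV x2 b2)
  then show ?thesis using assms by (cases v3; cases v4) (auto simp: adjVV adjCV adjVC adjCC adj_irrefl)
next
  case (ConV k2 g2)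
  then show ?thesis
  proof (cases v3)
    case (VarV x3 b3)
    then show ?thesis using assms ConV by (cases v4) (auto simp: adjVV adjCV adjVC adjCC adj_irrefl)
  next
    case C3: (ConV k3 g3)
    then show ?thesis
    proof (cases v4)
      case (VarV x4 b4)
      then show ?thesis using assms ConV C3 by (auto simp: adjVV adjCV adjVC adjCC adj_irrefl)
    next
      case C4: (ConV k4 g4)
      have "k2 < length cs" "k3 = k2" "k4 = k2" "sat_assign (cs!k2) g2" "sat_assign (cs!k2) g3"
        "sat_assign (cs!k2) g4" "g2 \<noteq> g3" "g2 \<noteq> g4" "g3 \<noteq> g4" "y \<in> fst (cs!k2)"
        "g2 y = a" "g3 y = a" "g4 y = a"
        using assms ConV C3 C4 by (auto simp: adjVV adjCV adjVC adjCC adj_irrefl)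
      moreover have "card (fst (cs!k2)) = 3" using w \<open>k2 < length cs\<close> by (simp add: wf_def)
      ultimately show ?thesis using sat_le2[of "cs!k2" g2 g3 g4 y a] by auto
    qed
  qed
qed

lemma K4:
  assumes w: "wf cs"
    and a: "{v1, v2} \<in> graph_E n cs" "{v1, v3} \<in> graph_E n cs" "{v1, v4} \<in> graph_E n cs"
    "{v2, v3} \<in> graph_E n cs" "{v2, v4} \<in> graph_E n cs" "{v3, v4} \<in> graph_E n cs"
  shows "\<exists>k g1 g2 g3 g4. v1 = ConV k g1 \<and> v2 = ConV k g2 \<and> v3 = ConV k g3 \<and> v4 = ConV k g4"
proof -
  have s: "{u,v} = {v,u}" for u v :: vtx by auto
  have n1: "\<not> (\<exists>y a. v1 = VarV y a)" using noVarK4[OF w] a by metis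
  have n2: "\<not> (\<exists>y a. v2 = VarV y a)" using noVarK4[OF w] a s by metis
  have n3: "\<not> (\<exists>y a. v3 = VarV y a)" using noVarK4[OF w] a s by metis
  have n4: "\<not> (\<exists>y a. v4 = VarV y a)" using noVarK4[OF w] a s by metis
  obtain k1 g1 where 1: "v1 = ConV k1 g1" using n1 by (cases v1) auto
  obtain k2 g2 where 2: "v2 = ConV k2 g2" using n2 by (cases v2) auto
  obtain k3 g3 where 3: "v3 = ConV k3 g3" using n3 by (cases v3) auto
  obtain k4 g4 where 4: "v4 = ConV k4 g4" using n4 by (cases v4) auto
  show ?thesis using a 1 2 3 4 by (auto simp: adjCC)
qed



definition mk :: "nat \<Rightarrow> nat \<Rightarrow> nat \<Rightarrow> bool \<Rightarrow> bool \<Rightarrow> bool \<Rightarrow> nat \<Rightarrow> bool" where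
  "mk x z t b a c = (\<lambda>v. if v = x then a else if v = z then c else if v = t then ((b \<noteq> a) \<noteq> c) else False)"

lemma mk_sat:
  assumes "fst C = {x,z,t}" "x \<noteq> z" "z \<noteq> t" "x \<noteq> t"
  shows "sat_assign C (mk x z t (snd C) a c)"
proof -
  have "odd (card {v \<in> {x,z,t}. mk x z t (snd C) a c v}) = snd C"
    using parity3[of x z t "mk x z t (snd C) a c"] assms by (auto simp: mk_def)
  thus ?thesis using assms unfolding sat_assign_def by (auto simp: mk_def)
qed

lemma mk_x: "mk x z t b a c x = a" by (simp add: mk_def)
lemma mk_z: "x \<noteq> z \<Longrightarrow> mk x z t b a c z = c" by (simp add: mk_def)

lemma mk_eq:
  assumes "card (fst C) = 3" "fst C = {x,z,t}" "x \<noteq> z" "z \<noteq> t" "x \<noteq> t" "sat_assign C f"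
  shows "f = mk x z t (snd C) (f x) (f z)"
  by (rule sat_det[OF assms(1) assms(6) mk_sat[OF assms(2-5)], of x z]) (use assms in \<open>auto simp: mk_def\<close>)

lemma card5:
  assumes "card (fst C) = 3" "sat_assign C g1" "sat_assign C g2" "sat_assign C g3" "sat_assign C g4"
    "sat_assign C h" "g1 \<noteq> g2" "g1 \<noteq> g3" "g1 \<noteq> g4" "g2 \<noteq> g3" "g2 \<noteq> g4" "g3 \<noteq> g4"
    "h \<noteq> g1" "h \<noteq> g2" "h \<noteq> g3" "h \<noteq> g4"
  shows False
proof -
  have "card {h,g1,g2,g3,g4} = 5" using assms by simp
  moreover have "card {h,g1,g2,g3,g4} \<le> card {g. sat_assign C g}"
    by (rule card_mono) (use sat_le4[OF assms(1)] assms in auto)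
  ultimately show False using sat_le4[OF assms(1)] by simp
qed

lemma varstep:
  fixes \<pi> :: "vtx \<Rightarrow> vtx" and G :: "(nat \<Rightarrow> bool) \<Rightarrow> (nat \<Rightarrow> bool)"
  assumes T3: "card (fst D) = 3" and k: "k < length cs'" and D: "D = cs' ! k"
    and S3: "card (fst C) = 3" and S: "fst C = {x,z,t}" "x \<noteq> z" "z \<noteq> t" "x \<noteq> t"
    and G: "\<And>f. sat_assign C f \<Longrightarrow> sat_assign D (G f)"
    and Ginj: "\<And>f g. sat_assign C f \<Longrightarrow> sat_assign C g \<Longrightarrow> G f = G g \<Longrightarrow> f = g"
    and HV: "\<And>f. sat_assign C f \<Longrightarrow> {ConV k (G f), \<pi> (VarV x (f x))} \<in> graph_E n' cs'"
    and injVC: "\<And>f a. sat_assign C f \<Longrightarrow> \<pi> (VarV x a) \<noteq> ConV k (G f)"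
  shows "\<exists>y bF. y \<in> fst D \<and> \<pi> (VarV x False) = VarV y bF \<and> \<pi> (VarV x True) = VarV y (\<not> bF)
            \<and> (\<forall>f. sat_assign C f \<longrightarrow> G f y = (f x \<noteq> bF))"
proof -
  define F where "F a c = mk x z t (snd C) a c" for a c
  have Fs: "sat_assign C (F a c)" for a c unfolding F_def by (rule mk_sat[OF S])
  have Fx: "F a c x = a" for a c unfolding F_def by (rule mk_x)
  have Fz: "F a c z = c" for a c unfolding F_def using S by (simp add: mk_z)
  have Fd: "F a c \<noteq> F a' c'" if "(a,c) \<noteq> (a',c')" for a c a' c'
  proof
    assume "F a c = F a' c'"
    hence "F a c x = F a' c' x" "F a c z = F a' c' z" by auto
    thus False using that Fx Fz by simp
  qed
  have Gd: "G (F a c) \<noteq> G (F a' c')" if "(a,c) \<noteq> (a',c')" for a c a' c'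
    using Ginj[OF Fs Fs] Fd[OF that] by blast
  have GS: "sat_assign D (G (F a c))" for a c using G Fs by blast
  have vx: "\<exists>y b. y \<in> fst D \<and> \<pi> (VarV x a) = VarV y b \<and> G (F a False) y = b \<and> G (F a True) y = b" for a
  proof (cases "\<pi> (VarV x a)")
    case (VarV y b)
    then show ?thesis using HV[OF Fs, of a False] HV[OF Fs, of a True] Fx D
      by (auto simp: adjCV)
  next
    case (ConV k' h)
    have 1: "k' = k" "sat_assign D h" "h \<noteq> G (F a False)" "h \<noteq> G (F a True)"
      using HV[OF Fs, of a False] HV[OF Fs, of a True] Fx D ConV by (auto simp: adjCC)
    have 2: "h \<noteq> G (F (\<not> a) c)" for c using injVC[OF Fs, of a "\<not> a" c] ConV 1 by auto
    show ?thesis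
      using card5[OF T3 GS GS GS GS 1(2), of a False a True "\<not>a" False "\<not>a" True]
        Gd 1 2 by auto
  qed
  obtain y0 b0 where 0: "y0 \<in> fst D" "\<pi> (VarV x False) = VarV y0 b0" "G (F False False) y0 = b0"
    "G (F False True) y0 = b0" using vx[of False] by blast
  obtain y1 b1 where 1: "y1 \<in> fst D" "\<pi> (VarV x True) = VarV y1 b1" "G (F True False) y1 = b1"
    "G (F True True) y1 = b1" using vx[of True] by blast
  have n1: "G (F True c) y0 \<noteq> b0" for c
  proof
    assume "G (F True c) y0 = b0"
    thus False using sat_le2[OF T3 GS GS GS, of False False False True True c y0 b0] 0 Gd by auto
  qed
  have yy: "y1 = y0"
  proof (rule ccontr)
    assume "y1 \<noteq> y0"
    have "G (F True False) = G (F True True)"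
      by (rule sat_det[OF T3 GS GS \<open>y1 \<noteq> y0\<close> 1(1) 0(1)]) (use 1 n1 in auto)
    thus False using Gd by auto
  qed
  have bb: "b1 = (\<not> b0)" using n1[of False] 1 yy by auto
  have all: "G f y0 = (f x \<noteq> b0)" if f: "sat_assign C f" for f
  proof -
    have "f = F (f x) (f z)" unfolding F_def by (rule mk_eq[OF S3 S f])
    hence "G f = G (F (f x) (f z))" by simp
    thus ?thesis using 0 1 yy bb by (cases "f x"; cases "f z") auto
  qed
  show ?thesis using 0 1 yy bb all by blast
qed



definition conf :: "vtx \<Rightarrow> nat \<Rightarrow> bool" where
  "conf v = (case v of ConV _ g \<Rightarrow> g | VarV _ _ \<Rightarrow> (\<lambda>_. False))"

lemma key:
  fixes \<pi> :: "vtx \<Rightarrow> vtx"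
  assumes wf': "wf cs'" and hom: "\<forall>k<length cs'. snd (cs'!k) = False"
    and j: "j < length cs" and S3: "card (fst (cs!j)) = 3" and Sn: "fst (cs!j) \<subseteq> {..<n}"
    and inj: "inj_on \<pi> (graph_V n cs)"
    and pres: "\<forall>e\<in>graph_E n cs. (\<exists>f. ConV j f \<in> e) \<longrightarrow> \<pi> ` e \<in> graph_E n' cs'"
  shows "odd (card {x \<in> fst (cs!j). (\<exists>y. \<pi> (VarV x False) = VarV y True)}) = snd (cs!j)"
proof -
  define C where "C = cs ! j"
  have S3': "card (fst C) = 3" using S3 C_def by simp
  have HC: "{\<pi> (ConV j f), \<pi> (ConV j g)} \<in> graph_E n' cs'"
    if "sat_assign C f" "sat_assign C g" "f \<noteq> g" for f g
  proof -
    have "{ConV j f, ConV j g} \<in> graph_E n cs" using that j C_def by (simp add: adjCC)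
    thus ?thesis using pres by force
  qed
  have HV: "{\<pi> (ConV j f), \<pi> (VarV v (f v))} \<in> graph_E n' cs'"
    if "sat_assign C f" "v \<in> fst C" for f v
  proof -
    have "{ConV j f, VarV v (f v)} \<in> graph_E n cs" using that j C_def by (simp add: adjCV)
    thus ?thesis using pres by force
  qed
  have VC: "ConV j f \<in> graph_V n cs" if "sat_assign C f" for f
    using that j C_def unfolding graph_V_def by auto
  have VV: "VarV v a \<in> graph_V n cs" if "v \<in> fst C" for v a
    using that Sn C_def unfolding graph_V_def by auto
  have injD: "u = v" if "\<pi> u = \<pi> v" "u \<in> graph_V n cs" "v \<in> graph_V n cs" for u v
    using inj that by (meson inj_onD)
  obtain x1 x2 x3 where X: "fst C = {x1,x2,x3}" "x1 \<noteq> x2" "x2 \<noteq> x3" "x1 \<noteq> x3"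
    using S3' by (auto simp: card_3_iff)
  define F where "F a c = mk x1 x2 x3 (snd C) a c" for a c
  have Fs: "sat_assign C (F a c)" for a c unfolding F_def by (rule mk_sat[OF X])
  have Fx: "F a c x1 = a" for a c unfolding F_def by (rule mk_x)
  have Fz: "F a c x2 = c" for a c unfolding F_def using X by (simp add: mk_z)
  have Fd: "F a c \<noteq> F a' c'" if "(a,c) \<noteq> (a',c')" for a c a' c'
  proof
    assume "F a c = F a' c'"
    hence "F a c x1 = F a' c' x1" "F a c x2 = F a' c' x2" by auto
    thus False using that Fx Fz by simp
  qed
  have Feq: "f = F (f x1) (f x2)" if "sat_assign C f" for f
    unfolding F_def by (rule mk_eq[OF S3' X that])
  obtain k g1 g2 g3 g4 where K: "\<pi> (ConV j (F False False)) = ConV k g1"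
     "\<pi> (ConV j (F False True)) = ConV k g2" "\<pi> (ConV j (F True False)) = ConV k g3"
     "\<pi> (ConV j (F True True)) = ConV k g4"
  proof -
    have d: "F False False \<noteq> F False True" "F False False \<noteq> F True False" "F False False \<noteq> F True True"
      "F False True \<noteq> F True False" "F False True \<noteq> F True True" "F True False \<noteq> F True True"
      using Fd by auto
    show ?thesis
      using K4[OF wf' HC[OF Fs Fs d(1)] HC[OF Fs Fs d(2)] HC[OF Fs Fs d(3)] HC[OF Fs Fs d(4)]
        HC[OF Fs Fs d(5)] HC[OF Fs Fs d(6)]] that by blast
  qed
  have Pk: "\<exists>g. \<pi> (ConV j f) = ConV k g" if "sat_assign C f" for f
  proof -
    have "f = F (f x1) (f x2)" by (rule Feq[OF that])
    thus ?thesis using K by (cases "f x1"; cases "f x2") (metis)+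
  qed
  define G where "G f = conf (\<pi> (ConV j f))" for f
  have PG: "\<pi> (ConV j f) = ConV k (G f)" if "sat_assign C f" for f
    using Pk[OF that] unfolding G_def conf_def by auto
  have kG: "k < length cs' \<and> sat_assign (cs'!k) (G f)" if f: "sat_assign C f" for f
  proof -
    have "F (\<not> f x1) (f x2) \<noteq> f" using Fx by (metis)
    hence "{ConV k (G f), ConV k (G (F (\<not> f x1) (f x2)))} \<in> graph_E n' cs'"
      using HC[OF f Fs] PG[OF f] PG[OF Fs] by metis
    thus ?thesis by (simp add: adjCC)
  qed
  have kl: "k < length cs'" using kG[OF Fs] by blast
  define D where "D = cs' ! k"
  have T3: "card (fst D) = 3" using wf' kl D_def by (simp add: wf_def)
  have Dh: "snd D = False" using hom kl D_def by simp
  have GS: "sat_assign D (G f)" if "sat_assign C f" for f using kG[OF that] D_def by simp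
  have Ginj: "f = g" if "sat_assign C f" "sat_assign C g" "G f = G g" for f g
  proof -
    have "\<pi> (ConV j f) = \<pi> (ConV j g)" using PG that by metis
    hence "ConV j f = ConV j g" using injD VC that by blast
    thus ?thesis by simp
  qed
  have HV': "{ConV k (G f), \<pi> (VarV v (f v))} \<in> graph_E n' cs'"
    if "sat_assign C f" "v \<in> fst C" for f v using HV[OF that] PG[OF that(1)] by simp
  have injVC: "\<pi> (VarV v a) \<noteq> ConV k (G f)" if "sat_assign C f" "v \<in> fst C" for f v a
  proof
    assume "\<pi> (VarV v a) = ConV k (G f)"
    hence "\<pi> (VarV v a) = \<pi> (ConV j f)" using PG[OF that(1)] by simp
    hence "VarV v a = ConV j f" using injD VV VC that by blast
    thus False by simp
  qed
  have vs: "\<exists>y bF. y \<in> fst D \<and> \<pi> (VarV x False) = VarV y bF \<and> \<pi> (VarV x True) = VarV y (\<not> bF)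
            \<and> (\<forall>f. sat_assign C f \<longrightarrow> G f y = (f x \<noteq> bF))"
    if "fst C = {x,z,t}" "x \<noteq> z" "z \<noteq> t" "x \<noteq> t" for x z t
  proof -
    have xin: "x \<in> fst C" using that by auto
    show ?thesis by (rule varstep[where G=G and \<pi>=\<pi> and C=C and D=D, OF T3 kl D_def S3' that GS Ginj HV'[OF _ xin] injVC[OF _ xin]])
  qed
  obtain y1 b1 where 1: "y1 \<in> fst D" "\<pi> (VarV x1 False) = VarV y1 b1" "\<pi> (VarV x1 True) = VarV y1 (\<not> b1)"
     "\<forall>f. sat_assign C f \<longrightarrow> G f y1 = (f x1 \<noteq> b1)"
    using vs[OF X] by blast
  obtain y2 b2 where 2: "y2 \<in> fst D" "\<pi> (VarV x2 False) = VarV y2 b2" "\<pi> (VarV x2 True) = VarV y2 (\<not> b2)"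
     "\<forall>f. sat_assign C f \<longrightarrow> G f y2 = (f x2 \<noteq> b2)"
    using vs[of x2 x1 x3] X by (auto simp: insert_commute)
  obtain y3 b3 where 3: "y3 \<in> fst D" "\<pi> (VarV x3 False) = VarV y3 b3" "\<pi> (VarV x3 True) = VarV y3 (\<not> b3)"
     "\<forall>f. sat_assign C f \<longrightarrow> G f y3 = (f x3 \<noteq> b3)"
    using vs[of x3 x1 x2] X by (auto simp: insert_commute)
  have dy: "ya \<noteq> yb"
    if h: "va \<in> fst C" "vb \<in> fst C" "va \<noteq> vb"
       "\<pi> (VarV va False) = VarV ya ba" "\<pi> (VarV va True) = VarV ya (\<not> ba)"
       "\<pi> (VarV vb False) = VarV yb bb" for va vb ya yb ba bb
  proof
    assume "ya = yb"
    then consider "\<pi> (VarV va False) = \<pi> (VarV vb False)" | "\<pi> (VarV va True) = \<pi> (VarV vb False)"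
      using h by (cases ba; cases bb) auto
    thus False
    proof cases
      case 1 thus False using injD[OF 1 VV VV] h by auto
    next
      case 2 thus False using injD[OF 2 VV VV] h by auto
    qed
  qed
  have d12: "y1 \<noteq> y2" by (rule dy[of x1 x2 _ b1 _ b2]) (use X 1 2 in auto)
  have d13: "y1 \<noteq> y3" by (rule dy[of x1 x3 _ b1 _ b3]) (use X 1 3 in auto)
  have d23: "y2 \<noteq> y3" by (rule dy[of x2 x3 _ b2 _ b3]) (use X 2 3 in auto)
  have finD: "finite (fst D)" using T3 by (metis card.infinite zero_neq_numeral)
  have TD: "fst D = {y1,y2,y3}"
  proof -
    have "card {y1,y2,y3} = 3" using d12 d13 d23 by simp
    thus ?thesis using card_subset_eq[OF finD, of "{y1,y2,y3}"] 1 2 3 T3 by auto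
  qed
  define f0 where "f0 = F False False"
  have f0s: "sat_assign C f0" unfolding f0_def by (rule Fs)
  have f03: "f0 x3 = snd C" unfolding f0_def F_def mk_def using X by auto
  have "snd D = ((G f0 y1 \<noteq> G f0 y2) \<noteq> G f0 y3)"
    by (rule sat_par[OF GS[OF f0s] TD d12 d23 d13])
  hence par: "snd C = ((b1 \<noteq> b2) \<noteq> b3)"
    using Dh 1(4) 2(4) 3(4) f0s f03 Fx Fz unfolding f0_def by auto
  have s1: "(\<exists>y. \<pi> (VarV x1 False) = VarV y True) = b1" using 1 by auto
  have s2: "(\<exists>y. \<pi> (VarV x2 False) = VarV y True) = b2" using 2 by auto
  have s3: "(\<exists>y. \<pi> (VarV x3 False) = VarV y True) = b3" using 3 by auto
  show ?thesis
    using parity3[OF X(2,3,4), of "\<lambda>x. \<exists>y. \<pi> (VarV x False) = VarV y True"] X s1 s2 s3 par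
    unfolding C_def[symmetric] by simp
qed



lemma Ebound:
  assumes w: "wf cs"
  shows "finite (graph_E n cs) \<and> card (graph_E n cs) \<le> n + 28 * length cs"
proof -
  define L where "L = length cs"
  define Fs where "Fs j = {f. sat_assign (cs!j) f}" for j
  have Fs4: "finite (Fs j) \<and> card (Fs j) \<le> 4" if "j < L" for j
    using sat_le4[of "cs!j"] w that unfolding wf_def Fs_def L_def by auto
  have S3: "finite (fst (cs!j)) \<and> card (fst (cs!j)) = 3" if "j < L" for j
    using w that unfolding wf_def L_def by (metis card.infinite zero_neq_numeral)
  define E1 where "E1 = (\<lambda>x. {VarV x False, VarV x True}) ` {..<n}"
  define I2 where "I2 = (SIGMA j:{..<L}. Fs j \<times> Fs j)"
  define I3 where "I3 = (SIGMA j:{..<L}. Fs j \<times> fst (cs!j))"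
  define E2 where "E2 = (\<lambda>(j,f,g). {ConV j f, ConV j g}) ` I2"
  define E3 where "E3 = (\<lambda>(j,f,x). {ConV j f, VarV x (f x)}) ` I3"
  have sub: "graph_E n cs \<subseteq> E1 \<union> E2 \<union> E3"
    unfolding graph_E_def E1_def E2_def E3_def I2_def I3_def Fs_def L_def by fastforce
  have fI2: "finite I2" unfolding I2_def using Fs4 by auto
  have fI3: "finite I3" unfolding I3_def using Fs4 S3 by auto
  have cI2: "card I2 \<le> 16 * L"
  proof -
    have "card I2 = (\<Sum>j<L. card (Fs j \<times> Fs j))" unfolding I2_def
      by (rule card_SigmaI) (use Fs4 in auto)
    also have "\<dots> \<le> (\<Sum>j<L. 16)"
    proof (rule sum_mono)
      fix j assume "j \<in> {..<L}"
      hence "card (Fs j) \<le> 4" using Fs4 by auto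
      hence "card (Fs j) * card (Fs j) \<le> 4 * 4" by (intro mult_le_mono) auto
      thus "card (Fs j \<times> Fs j) \<le> 16" by (simp add: card_cartesian_product)
    qed
    finally show ?thesis by simp
  qed
  have cI3: "card I3 \<le> 12 * L"
  proof -
    have "card I3 = (\<Sum>j<L. card (Fs j \<times> fst (cs!j)))" unfolding I3_def
      by (rule card_SigmaI) (use Fs4 S3 in auto)
    also have "\<dots> \<le> (\<Sum>j<L. 12)"
    proof (rule sum_mono)
      fix j assume "j \<in> {..<L}"
      hence "card (Fs j) \<le> 4" "card (fst (cs!j)) = 3" using Fs4 S3 by auto
      hence "card (Fs j) * card (fst (cs!j)) \<le> 4 * 3" by (intro mult_le_mono) auto
      thus "card (Fs j \<times> fst (cs!j)) \<le> 12" by (simp add: card_cartesian_product)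
    qed
    finally show ?thesis by simp
  qed
  have fin: "finite (E1 \<union> E2 \<union> E3)" unfolding E1_def E2_def E3_def using fI2 fI3 by auto
  have "card (E1 \<union> E2 \<union> E3) \<le> card E1 + card E2 + card E3"
    by (meson add_le_mono card_Un_le le_refl order_trans)
  moreover have "card E1 \<le> n" unfolding E1_def using card_image_le[of "{..<n}"] by auto
  moreover have "card E2 \<le> 16 * L" unfolding E2_def using order_trans[OF card_image_le[OF fI2] cI2] by simp
  moreover have "card E3 \<le> 12 * L" unfolding E3_def using order_trans[OF card_image_le[OF fI3] cI3] by simp
  ultimately have "card (E1 \<union> E2 \<union> E3) \<le> n + 28 * L" by linarith
  thus ?thesis using card_mono[OF fin sub] finite_subset[OF sub fin] L_def by auto
qed

lemma edge_sep: "e \<in> graph_E n cs \<Longrightarrow> ConV j f \<in> e \<Longrightarrow> ConV j' f' \<in> e \<Longrightarrow> j = j'"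
  unfolding graph_E_def by auto

lemma homogenize_nth: "j < length cs \<Longrightarrow> homogenize cs ! j = (fst (cs!j), False)"
  unfolding homogenize_def by (auto simp: case_prod_beta)

lemma homogenize_len[simp]: "length (homogenize cs) = length cs"
  unfolding homogenize_def by simp

lemma wf_hom: "wf cs \<Longrightarrow> wf (homogenize cs)"
  unfolding wf_def by (simp add: homogenize_nth)

definition unsatA :: "nat set \<Rightarrow> xor_instance \<Rightarrow> nat set" where
  "unsatA A cs = {j. j < length cs \<and> odd (card {x \<in> fst (cs!j). x \<in> A}) \<noteq> snd (cs!j)}"

lemma miss:
  fixes \<pi> :: "vtx \<Rightarrow> vtx"
  assumes w: "wf cs" and sub: "\<forall>j<length cs. fst (cs!j) \<subseteq> {..<n}"
    and inj: "inj_on \<pi> (graph_V n cs)"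
  shows "card (unsatA {x. x < n \<and> (\<exists>y. \<pi> (VarV x False) = VarV y True)} cs)
           \<le> card {e \<in> graph_E n cs. \<pi> ` e \<notin> graph_E n (homogenize cs)}"
proof -
  define A where "A = {x. x < n \<and> (\<exists>y. \<pi> (VarV x False) = VarV y True)}"
  define B where "B = {e \<in> graph_E n cs. \<pi> ` e \<notin> graph_E n (homogenize cs)}"
  have ex: "\<exists>e. e \<in> B \<and> (\<exists>f. ConV j f \<in> e)" if j: "j \<in> unsatA A cs" for j
  proof (rule ccontr)
    assume nex: "\<not> ?thesis"
    have jl: "j < length cs" using j unfolding unsatA_def by auto
    have pres: "\<forall>e\<in>graph_E n cs. (\<exists>f. ConV j f \<in> e) \<longrightarrow> \<pi> ` e \<in> graph_E n (homogenize cs)"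
      using nex unfolding B_def by blast
    have hom: "\<forall>k<length (homogenize cs). snd (homogenize cs ! k) = False"
      by (simp add: homogenize_nth)
    have S3: "card (fst (cs!j)) = 3" using w jl unfolding wf_def by auto
    have "odd (card {x \<in> fst (cs!j). (\<exists>y. \<pi> (VarV x False) = VarV y True)}) = snd (cs!j)"
      by (rule key[OF wf_hom[OF w] hom jl S3 sub[rule_format, OF jl] inj pres])
    moreover have "{x \<in> fst (cs!j). (\<exists>y. \<pi> (VarV x False) = VarV y True)} = {x \<in> fst (cs!j). x \<in> A}"
      using sub jl unfolding A_def by auto
    ultimately show False using j unfolding unsatA_def by auto
  qed
  define h where "h j = (SOME e. e \<in> B \<and> (\<exists>f. ConV j f \<in> e))" for j
  have h: "h j \<in> B \<and> (\<exists>f. ConV j f \<in> h j)" if "j \<in> unsatA A cs" for j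
    unfolding h_def using someI_ex[OF ex[OF that]] .
  have inj_h: "inj_on h (unsatA A cs)"
  proof (rule inj_onI)
    fix j j' assume "j \<in> unsatA A cs" "j' \<in> unsatA A cs" "h j = h j'"
    thus "j = j'" using h edge_sep unfolding B_def by (metis (no_types, lifting) mem_Collect_eq)
  qed
  have finB: "finite B" unfolding B_def using Ebound[OF w] by auto
  have "card (unsatA A cs) \<le> card B"
    by (rule card_inj_on_le[OF inj_h _ finB]) (use h in auto)
  thus ?thesis unfolding A_def B_def .
qed



lemma sat_flip:
  assumes "finite S" "m \<in> S"
  shows "sat_assign (S,b) (f(m := \<not> f m)) \<longleftrightarrow> sat_assign (S, \<not> b) f"
proof -
  have fin: "finite {x \<in> S. f x}" using assms by auto
  have "odd (card {x \<in> S. (f(m := \<not> f m)) x}) \<longleftrightarrow> \<not> odd (card {x \<in> S. f x})"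
  proof (cases "f m")
    case True
    hence e: "{x \<in> S. (f(m := \<not> f m)) x} = {x \<in> S. f x} - {m}" by auto
    have "m \<in> {x \<in> S. f x}" using True assms by auto
    hence "card {x \<in> S. f x} > 0" using fin card_gt_0_iff by blast
    thus ?thesis unfolding e using \<open>m \<in> {x \<in> S. f x}\<close> fin by (auto simp: card_Diff_singleton)
  next
    case False
    hence e: "{x \<in> S. (f(m := \<not> f m)) x} = insert m {x \<in> S. f x}" using assms by auto
    show ?thesis unfolding e using False fin by simp
  qed
  moreover have "(\<forall>x. x \<notin> S \<longrightarrow> \<not> (f(m := \<not> f m)) x) \<longleftrightarrow> (\<forall>x. x \<notin> S \<longrightarrow> \<not> f x)"
    using assms by auto
  ultimately show ?thesis unfolding sat_assign_def by auto
qed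

definition flipf :: "xor_instance \<Rightarrow> nat \<Rightarrow> (nat \<Rightarrow> bool) \<Rightarrow> (nat \<Rightarrow> bool)" where
  "flipf cs j f = (if snd (cs!j) then f(Min (fst (cs!j)) := \<not> f (Min (fst (cs!j)))) else f)"

definition phi :: "xor_instance \<Rightarrow> vtx \<Rightarrow> vtx" where
  "phi cs v = (case v of VarV x a \<Rightarrow> VarV x a | ConV j f \<Rightarrow> ConV j (flipf cs j f))"

lemma phi_phi: "phi cs (phi cs v) = v"
  by (cases v) (auto simp: phi_def flipf_def)

lemma bij_exists:
  assumes w: "wf cs"
  shows "bij_betw (phi cs) (graph_V n cs) (graph_V n (homogenize cs))"
proof -
  have mS: "finite (fst (cs!j)) \<and> Min (fst (cs!j)) \<in> fst (cs!j)" if "j < length cs" for j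
  proof -
    have c: "card (fst (cs!j)) = 3" using w that unfolding wf_def by auto
    hence f: "finite (fst (cs!j))" by (metis card.infinite zero_neq_numeral)
    moreover have "fst (cs!j) \<noteq> {}" using c by auto
    ultimately show ?thesis by auto
  qed
  have s1: "sat_assign (homogenize cs ! j) (flipf cs j f)" if "j < length cs" "sat_assign (cs!j) f" for j f
  proof (cases "snd (cs!j)")
    case True
    have "sat_assign (fst (cs!j), snd (cs!j)) f" using that by simp
    thus ?thesis using sat_flip[of "fst (cs!j)" "Min (fst (cs!j))" False f] mS[OF that(1)] True that
      by (simp add: flipf_def homogenize_nth)
  next
    case False
    thus ?thesis using that by (simp add: flipf_def homogenize_nth)
       (metis prod.collapse)
  qed
  have s2: "sat_assign (cs ! j) (flipf cs j g)" if "j < length cs" "sat_assign (homogenize cs!j) g" for j g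
  proof (cases "snd (cs!j)")
    case True
    have "sat_assign (fst (cs!j), False) g" using that by (simp add: homogenize_nth)
    hence "sat_assign (fst (cs!j), True) (flipf cs j g)"
      using sat_flip[of "fst (cs!j)" "Min (fst (cs!j))" True g] mS[OF that(1)] True
      by (simp add: flipf_def)
    thus ?thesis using True by (metis prod.collapse)
  next
    case False
    have "sat_assign (fst (cs!j), False) g" using that by (simp add: homogenize_nth)
    thus ?thesis using False by (simp add: flipf_def) (metis prod.collapse)
  qed
  show ?thesis
  proof (rule bij_betw_byWitness[where f'="phi cs"])
    show "\<forall>a\<in>graph_V n cs. phi cs (phi cs a) = a" by (simp add: phi_phi)
    show "\<forall>a\<in>graph_V n (homogenize cs). phi cs (phi cs a) = a" by (simp add: phi_phi)
    show "phi cs ` graph_V n cs \<subseteq> graph_V n (homogenize cs)"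
      unfolding graph_V_def phi_def using s1 by auto
    show "phi cs ` graph_V n (homogenize cs) \<subseteq> graph_V n cs"
      unfolding graph_V_def phi_def using s2 by auto
  qed
qed

lemma GI_less:
  fixes V :: "'a set" and W :: "'b set"
  assumes ex: "\<exists>\<pi>. bij_betw \<pi> V W" and fE: "finite E"
    and all: "\<And>\<pi>. bij_betw \<pi> V W \<Longrightarrow>
        real (card {e \<in> E. \<pi> ` e \<in> F}) / real (max (card E) (card F)) < t"
  shows "GI V E W F < t"
proof -
  define sc where "sc \<pi> = real (card {e \<in> E. \<pi> ` e \<in> F}) / real (max (card E) (card F))" for \<pi> :: "'a \<Rightarrow> 'b"
  have sub: "sc ` {\<pi>. bij_betw \<pi> V W} \<subseteq> (\<lambda>k. real k / real (max (card E) (card F))) ` {..card E}"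
  proof
    fix v assume "v \<in> sc ` {\<pi>. bij_betw \<pi> V W}"
    then obtain \<pi> where "v = sc \<pi>" by blast
    moreover have "card {e \<in> E. \<pi> ` e \<in> F} \<le> card E" by (rule card_mono[OF fE]) auto
    ultimately show "v \<in> (\<lambda>k. real k / real (max (card E) (card F))) ` {..card E}"
      unfolding sc_def by auto
  qed
  have fin: "finite (sc ` {\<pi>. bij_betw \<pi> V W})" by (rule finite_subset[OF sub]) auto
  have ne: "sc ` {\<pi>. bij_betw \<pi> V W} \<noteq> {}" using ex by auto
  have "Max (sc ` {\<pi>. bij_betw \<pi> V W}) \<in> sc ` {\<pi>. bij_betw \<pi> V W}" by (rule Max_in[OF fin ne])
  then obtain \<pi> where "bij_betw \<pi> V W" "Max (sc ` {\<pi>. bij_betw \<pi> V W}) = sc \<pi>" by auto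
  thus ?thesis using all unfolding GI_def sc_def[symmetric] by auto
qed



definition Sets3 :: "nat \<Rightarrow> nat set set" where
  "Sets3 n = {S. S \<subseteq> {..<n} \<and> card S = 3}"

lemma fin_Sets3: "finite (Sets3 n)"
  by (rule finite_subset[of _ "Pow {..<n}"]) (auto simp: Sets3_def)

lemma X_eq: "xor_instances n m = {cs. set cs \<subseteq> Sets3 n \<times> UNIV \<and> length cs = m}"
  unfolding xor_instances_def Sets3_def by (force simp: subset_iff)

lemma cardX: "card (xor_instances n m) = (2 * card (Sets3 n)) ^ m"
  unfolding X_eq using fin_Sets3
  by (simp add: card_lists_length_eq card_cartesian_product card_UNIV_bool mult.commute)

lemma finX: "finite (xor_instances n m)"
  unfolding X_eq using fin_Sets3 by (simp add: finite_lists_length_eq)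

lemma Sets3_pos: "n \<ge> 3 \<Longrightarrow> card (Sets3 n) > 0"
proof -
  assume "n \<ge> 3"
  hence "{0,1,2} \<in> Sets3 n" unfolding Sets3_def by auto
  thus ?thesis using fin_Sets3 card_gt_0_iff by blast
qed

lemma X_props: "cs \<in> xor_instances n m \<Longrightarrow> length cs = m \<and> wf cs \<and> (\<forall>j<length cs. fst (cs!j) \<subseteq> {..<n})"
  unfolding xor_instances_def wf_def by (auto dest: nth_mem)

lemma cnt_AU: "card {cs \<in> xor_instances n m. unsatA A cs = U} \<le> card (Sets3 n) ^ m"
proof -
  have inj: "inj_on (map fst) {cs \<in> xor_instances n m. unsatA A cs = U}"
  proof (rule inj_onI)
    fix cs1 cs2 assume c1: "cs1 \<in> {cs \<in> xor_instances n m. unsatA A cs = U}"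
      and c2: "cs2 \<in> {cs \<in> xor_instances n m. unsatA A cs = U}" and eq: "map fst cs1 = map fst cs2"
    have l: "length cs1 = m" "length cs2 = m" using c1 c2 X_props by auto
    show "cs1 = cs2"
    proof (rule nth_equalityI)
      show "length cs1 = length cs2" using l by simp
      fix j assume j: "j < length cs1"
      have f: "fst (cs1!j) = fst (cs2!j)" using eq j l by (metis nth_map)
      have "(j \<in> U) = (odd (card {x \<in> fst (cs1!j). x \<in> A}) \<noteq> snd (cs1!j))"
        using c1 j unfolding unsatA_def by auto
      moreover have "(j \<in> U) = (odd (card {x \<in> fst (cs2!j). x \<in> A}) \<noteq> snd (cs2!j))"
        using c2 j l unfolding unsatA_def by auto
      ultimately have "snd (cs1!j) = snd (cs2!j)" using f by auto
      thus "cs1!j = cs2!j" using f by (simp add: prod_eq_iff)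
    qed
  qed
  have "map fst ` {cs \<in> xor_instances n m. unsatA A cs = U} \<subseteq> {ls. set ls \<subseteq> Sets3 n \<and> length ls = m}"
    unfolding X_eq by (fastforce simp: subset_iff)
  hence "card {cs \<in> xor_instances n m. unsatA A cs = U} \<le> card {ls. set ls \<subseteq> Sets3 n \<and> length ls = m}"
    by (intro card_inj_on_le[OF inj]) (auto simp: fin_Sets3 finite_lists_length_eq)
  thus ?thesis by (simp add: card_lists_length_eq fin_Sets3)
qed

definition Bad :: "nat \<Rightarrow> nat \<Rightarrow> xor_instance set" where
  "Bad n m = {cs \<in> xor_instances n m. \<exists>A \<subseteq> {..<n}. 4 * card (unsatA A cs) \<le> m}"

definition UU :: "nat \<Rightarrow> nat set set" where
  "UU m = {U \<in> Pow {..<m}. 4 * card U \<le> m}"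

lemma card_Bad: "card (Bad n m) \<le> 2 ^ n * card (UU m) * card (Sets3 n) ^ m"
proof -
  have sub: "Bad n m \<subseteq> (\<Union>A\<in>Pow {..<n}. \<Union>U\<in>UU m. {cs \<in> xor_instances n m. unsatA A cs = U})"
  proof
    fix cs assume "cs \<in> Bad n m"
    then obtain A where A: "cs \<in> xor_instances n m" "A \<subseteq> {..<n}" "4 * card (unsatA A cs) \<le> m"
      unfolding Bad_def by auto
    have "unsatA A cs \<in> UU m" using A X_props[OF A(1)] unfolding UU_def unsatA_def by auto
    thus "cs \<in> (\<Union>A\<in>Pow {..<n}. \<Union>U\<in>UU m. {cs \<in> xor_instances n m. unsatA A cs = U})"
      using A by blast
  qed
  have fU: "finite (UU m)" unfolding UU_def by auto
  have "card (Bad n m) \<le> card (\<Union>A\<in>Pow {..<n}. \<Union>U\<in>UU m. {cs \<in> xor_instances n m. unsatA A cs = U})"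
    by (rule card_mono[OF _ sub]) (auto intro: finite_subset[OF _ finX])
  also have "\<dots> \<le> (\<Sum>A\<in>Pow {..<n}. card (\<Union>U\<in>UU m. {cs \<in> xor_instances n m. unsatA A cs = U}))"
    by (rule card_UN_le) auto
  also have "\<dots> \<le> (\<Sum>A\<in>Pow {..<n}. (\<Sum>U\<in>UU m. card {cs \<in> xor_instances n m. unsatA A cs = U}))"
    by (intro sum_mono card_UN_le fU)
  also have "\<dots> \<le> (\<Sum>A\<in>Pow {..<n}. (\<Sum>U\<in>UU m. card (Sets3 n) ^ m))"
    by (intro sum_mono cnt_AU)
  also have "\<dots> = 2 ^ n * card (UU m) * card (Sets3 n) ^ m" by (simp add: card_Pow)
  finally show ?thesis .
qed


lemma UU_bound: "real (card (UU m)) \<le> sqrt 2 ^ m * (5/4) ^ m"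
proof -
  have fP: "finite (Pow {..<m})" by simp
  have one: "1 \<le> sqrt 2 ^ m / 4 ^ card U" if "U \<in> UU m" for U
  proof -
    have s4: "sqrt (2::real) ^ 4 = 4" using power_mult[of "sqrt (2::real)" 2 2] by simp
    have "(4::real) ^ card U = sqrt 2 ^ (4 * card U)"
      by (simp only: power_mult s4)
    also have "\<dots> \<le> sqrt 2 ^ m" using that unfolding UU_def by (intro power_increasing) auto
    finally show ?thesis by simp
  qed
  have "real (card (UU m)) = (\<Sum>U\<in>UU m. (1::real))" by simp
  also have "\<dots> \<le> (\<Sum>U\<in>UU m. sqrt 2 ^ m / 4 ^ card U)" by (rule sum_mono) (rule one)
  also have "\<dots> \<le> (\<Sum>U\<in>Pow {..<m}. sqrt 2 ^ m / 4 ^ card U)"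
    by (rule sum_mono2[OF fP]) (auto simp: UU_def)
  also have "\<dots> = (\<Sum>U\<in>Pow {..<m}. sqrt 2 ^ m * (1/4) ^ card U)"
    by (rule sum.cong) (simp_all add: power_divide)
  also have "\<dots> = sqrt 2 ^ m * (\<Sum>U\<in>Pow {..<m}. (1/4) ^ card U)"
    by (rule sum_distrib_left[symmetric])
  also have "(\<Sum>U\<in>Pow {..<m}. ((1::real)/4) ^ card U) = (\<Prod>x\<in>{..<m}. 1/4 + 1)"
  proof -
    have "(\<Prod>x\<in>{..<m}. (1::real)/4 + 1) = (\<Sum>X\<in>Pow {..<m}. (\<Prod>x\<in>X. 1/4) * (\<Prod>x\<in>{..<m}-X. 1))"
      by (rule prod_add) simp
    also have "\<dots> = (\<Sum>X\<in>Pow {..<m}. ((1::real)/4) ^ card X)"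
      by (rule sum.cong) simp_all
    finally show ?thesis by simp
  qed
  also have "\<dots> = (5/4) ^ m" by simp
  finally show ?thesis by simp
qed



lemma good_of_notbad:
  fixes eps :: real
  assumes X: "cs \<in> xor_instances n m" and nb: "cs \<notin> Bad n m" and e0: "0 < eps" and e1: "eps < 1"
    and small: "4 * eps * real (n + 28 * m) \<le> real m"
  shows "GI (graph_V n cs) (graph_E n cs) (graph_V n (homogenize cs)) (graph_E n (homogenize cs)) < 1 - eps"
proof -
  have l: "length cs = m" and w: "wf cs" and sub: "\<forall>j<length cs. fst (cs!j) \<subseteq> {..<n}"
    using X_props[OF X] by auto
  have EB: "finite (graph_E n cs)" "card (graph_E n cs) \<le> n + 28 * m" using Ebound[OF w] l by auto
  have FB: "card (graph_E n (homogenize cs)) \<le> n + 28 * m" using Ebound[OF wf_hom[OF w]] l by auto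
  show ?thesis
  proof (rule GI_less)
    show "\<exists>\<pi>. bij_betw \<pi> (graph_V n cs) (graph_V n (homogenize cs))" using bij_exists[OF w] by blast
    show "finite (graph_E n cs)" by (rule EB(1))
    fix \<pi> assume bij: "bij_betw \<pi> (graph_V n cs) (graph_V n (homogenize cs))"
    have inj: "inj_on \<pi> (graph_V n cs)" using bij by (rule bij_betw_imp_inj_on)
    define E where "E = graph_E n cs"
    define F where "F = graph_E n (homogenize cs)"
    define P where "P = {e \<in> E. \<pi> ` e \<in> F}"
    define B where "B = {e \<in> E. \<pi> ` e \<notin> F}"
    define M where "M = max (card E) (card F)"
    have cPB: "card P + card B = card E"
    proof -
      have "E = P \<union> B" "P \<inter> B = {}" unfolding P_def B_def by auto
      moreover have "finite P" "finite B" using EB(1) unfolding P_def B_def E_def by auto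
      ultimately show ?thesis using card_Un_disjoint by metis
    qed
    have MB: "M \<le> n + 28 * m" unfolding M_def E_def F_def using EB FB by auto
    have EM: "card E \<le> M" unfolding M_def by auto
    define A where "A = {x. x < n \<and> (\<exists>y. \<pi> (VarV x False) = VarV y True)}"
    have uB: "card (unsatA A cs) \<le> card B"
      using miss[OF w sub inj] unfolding A_def B_def E_def F_def .
    show "real (card {e \<in> graph_E n cs. \<pi> ` e \<in> graph_E n (homogenize cs)}) /
          real (max (card (graph_E n cs)) (card (graph_E n (homogenize cs)))) < 1 - eps"
      unfolding P_def[unfolded E_def F_def, symmetric] M_def[unfolded E_def F_def, symmetric]
    proof (rule ccontr)
      assume "\<not> real (card P) / real M < 1 - eps"
      hence ge: "1 - eps \<le> real (card P) / real M" by simp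
      have Mp: "M > 0"
      proof (rule ccontr)
        assume "\<not> M > 0" hence "M = 0" by simp
        thus False using ge e1 by simp
      qed
      hence "(1 - eps) * real M \<le> real (card P)" using ge by (simp add: pos_le_divide_eq)
      hence "real (card B) \<le> eps * real M" 
      proof -
        have "real (card P) + real (card B) = real (card E)" using cPB by (metis of_nat_add)
        moreover have "real (card E) \<le> real M" using EM by simp
        ultimately show ?thesis using \<open>(1 - eps) * real M \<le> real (card P)\<close> by (simp add: algebra_simps)
      qed
      also have "\<dots> \<le> eps * real (n + 28 * m)" using MB e0 by (intro mult_left_mono) auto
      finally have cB: "real (card B) \<le> eps * real (n + 28 * m)" .
      have "4 * real (card (unsatA A cs)) \<le> real m"
      proof -
        have "real (card (unsatA A cs)) \<le> real (card B)" using uB by simp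
        moreover have "4 * eps * real (n + 28 * m) = 4 * (eps * real (n + 28 * m))" by simp
        ultimately show ?thesis using small cB by linarith
      qed
      hence "4 * card (unsatA A cs) \<le> m" by linarith
      moreover have "A \<subseteq> {..<n}" unfolding A_def by auto
      ultimately have "cs \<in> Bad n m" using X unfolding Bad_def by blast
      thus False using nb by simp
    qed
  qed
qed


lemma sqrt2_le: "sqrt (2::real) \<le> 3/2"
proof -
  have "sqrt (2::real) \<le> sqrt (9/4)" by simp
  also have "sqrt (9/4::real) = 3/2" by (simp add: real_sqrt_divide)
  finally show ?thesis .
qed

lemma ratio:
  assumes n3: "n \<ge> 3" and mn: "m \<ge> 8 * n"
  shows "real (card (Bad n m)) / real (card (xor_instances n m)) \<le> (2 * (25/32)^4) ^ n"
proof -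
  define T where "T = card (Sets3 n)"
  have Tp: "T > 0" using Sets3_pos[OF n3] T_def by simp
  define r :: real where "r = sqrt 2 * 5 / 8"
  have r0: "0 \<le> r" and r1: "r \<le> 1" using sqrt2_le unfolding r_def by auto
  have r2: "r ^ 2 = 25/32"
  proof -
    have "r ^ 2 = (sqrt 2 * sqrt 2) * 25 / 64" unfolding r_def power2_eq_square by (simp add: field_simps)
    thus ?thesis by simp
  qed
  have "real (card (Bad n m)) \<le> 2 ^ n * real (card (UU m)) * real T ^ m"
    using of_nat_mono[OF card_Bad[of n m], where 'a=real] unfolding T_def by simp
  also have "\<dots> \<le> 2 ^ n * (sqrt 2 ^ m * (5/4) ^ m) * real T ^ m"
    by (intro mult_right_mono mult_left_mono UU_bound) auto
  also have "\<dots> = 2 ^ n * r ^ m * (2 * real T) ^ m"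
  proof -
    have eq: "r * (2 * real T) = sqrt 2 * (5/4) * real T" unfolding r_def by simp
    have h: "r ^ m * (2 * real T) ^ m = sqrt 2 ^ m * (5/4) ^ m * real T ^ m"
      by (simp only: power_mult_distrib[symmetric] eq)
    have "(2::real) ^ n * (sqrt 2 ^ m * (5/4) ^ m) * real T ^ m = 2 ^ n * (sqrt 2 ^ m * (5/4) ^ m * real T ^ m)"
      by (simp only: mult.assoc)
    also have "\<dots> = 2 ^ n * (r ^ m * (2 * real T) ^ m)" by (simp only: h)
    also have "\<dots> = 2 ^ n * r ^ m * (2 * real T) ^ m" by (simp only: mult.assoc)
    finally show ?thesis .
  qed
  finally have b: "real (card (Bad n m)) \<le> 2 ^ n * r ^ m * (2 * real T) ^ m" .
  have cX: "real (card (xor_instances n m)) = (2 * real T) ^ m" unfolding cardX T_def by simp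
  have pos: "(2 * real T) ^ m > 0" using Tp by simp
  have "real (card (Bad n m)) / real (card (xor_instances n m)) \<le> 2 ^ n * r ^ m"
    unfolding cX pos_divide_le_eq[OF pos] using b .
  also have "\<dots> \<le> 2 ^ n * r ^ (8 * n)"
  proof -
    have "r ^ m \<le> r ^ (8 * n)" by (rule power_decreasing[OF mn r0 r1])
    thus ?thesis by (intro mult_left_mono) auto
  qed
  also have "r ^ (8 * n) = ((r ^ 2) ^ 4) ^ n" 
  proof -
    show ?thesis unfolding power_mult[symmetric] by (simp add: mult.assoc)
  qed
  also have "(2::real) ^ n * ((r ^ 2) ^ 4) ^ n = (2 * (25/32)^4) ^ n"
    unfolding r2 by (rule power_mult_distrib[symmetric])
  finally show ?thesis .
qed



theorem lemma5p1:
  fixes c :: real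
  assumes "c \<ge> 10 ^ 10"
  shows "(\<lambda>n. measure_pmf.prob (random_3xor n (nat \<lfloor>c * real n\<rfloor>))
           {cs. GI (graph_V n cs) (graph_E n cs)
                   (graph_V n (homogenize cs)) (graph_E n (homogenize cs))
                 < 1 - 1 / (95 * c ^ 2)})
         \<longlonglongrightarrow> 1"
proof -
  define q :: real where "q = 2 * (25/32)^4"
  have q0: "0 \<le> q" and q1: "q < 1" unfolding q_def by (simp_all add: power_divide)
  define eps :: real where "eps = 1 / (95 * c ^ 2)"
  define pr where "pr n = measure_pmf.prob (random_3xor n (nat \<lfloor>c * real n\<rfloor>))
           {cs. GI (graph_V n cs) (graph_E n cs)
                   (graph_V n (homogenize cs)) (graph_E n (homogenize cs)) < 1 - eps}" for n
  have c8: "c \<ge> 8" using assms by simp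
  have c2: "c ^ 2 \<ge> 2"
  proof -
    have "(2::real) \<le> 8 * 8" by simp
    also have "\<dots> \<le> c * c" using c8 by (intro mult_mono) auto
    finally show ?thesis by (simp add: power2_eq_square)
  qed
  have e0: "0 < eps" unfolding eps_def using c2 c8 by simp
  have e1: "eps < 1" unfolding eps_def using c2 c8 by simp
  have e116: "116 * eps \<le> 1" unfolding eps_def using c2 c8 by (simp add: field_simps)
  have low: "1 - q ^ n \<le> pr n" if n3: "n \<ge> 3" for n
  proof -
    define m where "m = nat \<lfloor>c * real n\<rfloor>"
    have "real (8 * n) \<le> c * real n" using c8 by (simp add: mult_right_mono)
    hence "int (8 * n) \<le> \<lfloor>c * real n\<rfloor>" by (simp add: le_floor_iff)
    hence mn: "m \<ge> 8 * n" unfolding m_def by linarith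
    define X where "X = xor_instances n m"
    define Good where "Good = {cs. GI (graph_V n cs) (graph_E n cs)
                   (graph_V n (homogenize cs)) (graph_E n (homogenize cs)) < 1 - eps}"
    have fX: "finite X" unfolding X_def by (rule finX)
    have cXp: "card X > 0" unfolding X_def cardX using Sets3_pos[OF n3] by simp
    hence neX: "X \<noteq> {}" by auto
    have small: "4 * eps * real (n + 28 * m) \<le> real m"
    proof -
      have "real (n + 28 * m) \<le> 29 * real m" using mn by simp
      hence "4 * eps * real (n + 28 * m) \<le> 4 * eps * (29 * real m)"
        using e0 by (intro mult_left_mono) auto
      also have "\<dots> = (116 * eps) * real m" by simp
      also have "\<dots> \<le> 1 * real m" using e116 by (intro mult_right_mono) auto
      finally show ?thesis by simp
    qed
    have sub: "X \<subseteq> (X \<inter> Good) \<union> Bad n m"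
    proof
      fix cs assume cs: "cs \<in> X"
      show "cs \<in> (X \<inter> Good) \<union> Bad n m"
      proof (cases "cs \<in> Bad n m")
        case False
        hence "cs \<in> Good" unfolding Good_def
          using good_of_notbad[OF cs[unfolded X_def] False e0 e1 small] by simp
        thus ?thesis using cs by simp
      qed simp
    qed
    have fB: "finite (Bad n m)" unfolding Bad_def using finX by simp
    have "card X \<le> card (X \<inter> Good) + card (Bad n m)"
      using card_mono[OF _ sub] card_Un_le[of "X \<inter> Good" "Bad n m"] fX fB by force
    hence cle: "real (card X) - real (card (Bad n m)) \<le> real (card (X \<inter> Good))" by linarith
    have prX: "pr n = real (card (X \<inter> Good)) / real (card X)"
      unfolding pr_def random_3xor_def X_def[symmetric] m_def[symmetric] Good_def[symmetric]
      using measure_pmf_of_set[OF neX fX] by simp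
    have "1 - q ^ n \<le> 1 - real (card (Bad n m)) / real (card X)"
      using ratio[OF n3 mn] unfolding q_def X_def by simp
    also have "\<dots> = (real (card X) - real (card (Bad n m))) / real (card X)"
      using cXp by (simp add: field_simps)
    also have "\<dots> \<le> pr n" unfolding prX using cle cXp by (intro divide_right_mono) auto
    finally show ?thesis .
  qed
  have lim: "(\<lambda>n. 1 - q ^ n) \<longlonglongrightarrow> 1"
    using tendsto_diff[OF tendsto_const LIMSEQ_power_zero[of q]] q0 q1 by simp
  have "pr \<longlonglongrightarrow> 1"
  proof (rule tendsto_sandwich[OF _ _ lim tendsto_const])
    show "\<forall>\<^sub>F n in sequentially. 1 - q ^ n \<le> pr n"
      using eventually_ge_at_top[of "3::nat"] by (rule eventually_mono) (rule low)
    show "\<forall>\<^sub>F n in sequentially. pr n \<le> 1"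
      unfolding pr_def by (simp add: measure_pmf.prob_le_1)
  qed
  thus ?thesis unfolding pr_def eps_def .
qed


end
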